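(* Let $\mathbf{T}\in\mathbb{R}^{d\times T}$ have full column rank $T$, let $1\le M<T$, let $\kappa>0$, and let $\mathbf{G}=\mathbf{T}^\top\mathbf{T}$ have eigenvalues $\lambda_1(\mathbf{G})\ge\dots\ge\lambda_T(\mathbf{G})$ with $\lambda_M(\mathbf{G})>\lambda_{M+1}(\mathbf{G})$. Let $S_\star\subseteq\mathbb{R}^T$ be the span of eigenvectors of $\mathbf{G}$ for the top $M$ eigenvalues. For $\mathbf{A}\in\mathbb{R}^{T\times M}$ let $\mathbf{W}_e(\mathbf{A})\in\mathbb{R}^{T\times M}$ be the matrix whose $m$-th column is $\mathrm{softmax}(\mathbf{A}_{:,m}/\kappa)$. Then there exist $\mathbf{A}\in\mathbb{R}^{T\times M}$ and $\mathbf{W}_d\in\mathbb{R}^{M\times T}$ with $$\|\mathbf{T}\mathbf{W}_e(\mathbf{A})\mathbf{W}_d-\mathbf{T}\|_F^2=\sum_{i=M+1}^{T}\lambda_i(\mathbf{G})$$ (i.e., the softmax-encoder linear autoencoder attains the optimal rank-$M$ reconstruction error) if and only if there exist $M$ linearly independent vectors $x_1,\dots,x_M\in S_\star$ all of whose coordinates are strictly positive.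
   Context: $\mathrm{softmax}(z)_i=e^{z_i}/\sum_j e^{z_j}$. $\|\cdot\|_F$ is the Frobenius norm. For every $\mathbf{W}_e,\mathbf{W}_d$ of these shapes, $\|\mathbf{T}\mathbf{W}_e\mathbf{W}_d-\mathbf{T}\|_F^2\ge\sum_{i=M+1}^T\lambda_i(\mathbf{G})$ (the Eckart–Young bound), so the claim characterizes when this lower bound is achieved with a softmax-activated encoder. *)

theory Defs
  imports "HOL-Analysis.Analysis" "HOL-Computational_Algebra.Polynomial"
begin

definition charpoly :: "real^'n^'n \<Rightarrow> real poly" where
  "charpoly A = det ((\<chi> i j. (if i = j then [:0, 1:] else 0) - [:A$i$j:]) :: real poly^'n^'n)"

text \<open>Eigenvalues with multiplicity (roots of the characteristic polynomial),
  sorted in non-increasing order; eigval A i is the i-th one, 1-based.\<close>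
definition eigvals_desc :: "real^'n^'n \<Rightarrow> real list" where
  "eigvals_desc A = rev (sorted_list_of_multiset (proots (charpoly A)))"

definition eigval :: "real^'n^'n \<Rightarrow> nat \<Rightarrow> real" where
  "eigval A i = eigvals_desc A ! (i - 1)"

definition top_eigenspace :: "real^'n^'n \<Rightarrow> nat \<Rightarrow> (real^'n) set" where
  "top_eigenspace A M = span {v. \<exists>i\<in>{1..M}. A *v v = eigval A i *\<^sub>R v}"

definition softmax :: "real^'n \<Rightarrow> real^'n" where
  "softmax z = (\<chi> i. exp (z$i) / (\<Sum>j\<in>UNIV. exp (z$j)))"

definition softmax_enc :: "real \<Rightarrow> real^'m^'t \<Rightarrow> real^'m^'t" where
  "softmax_enc \<kappa> A = transpose (\<chi> m. softmax ((1/\<kappa>) *\<^sub>R column m A))"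

definition frob_norm :: "real^'n^'m \<Rightarrow> real" where
  "frob_norm X = sqrt (\<Sum>i\<in>UNIV. \<Sum>j\<in>UNIV. (X$i$j)^2)"

end

theory Submission
  imports Defs
begin

lemma symm_inner:
  fixes G :: "real^'n^'n"
  assumes "transpose G = G" shows "x \<bullet> (G *v y) = (G *v x) \<bullet> y"
  by (metis assms dot_lmul_matrix vector_transpose_matrix)

lemma mv_scale: "(G::real^'n^'m) *v (c *\<^sub>R x) = c *\<^sub>R (G *v x)"
  by (simp add: matrix_vector_mult_def vec_eq_iff sum_distrib_left mult.left_commute scaleR_vec_def)

lemma mv_add: "(G::real^'n^'m) *v (x + y) = G *v x + G *v y"
  by (simp add: matrix_vector_right_distrib)

lemma quad_scale: "(c *\<^sub>R x) \<bullet> ((G::real^'n^'n) *v (c *\<^sub>R x)) = c^2 * (x \<bullet> (G *v x))"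
  by (simp add: mv_scale power2_eq_square)

lemma cont_quad: "continuous_on K (\<lambda>x. x \<bullet> ((G::real^'n^'n) *v x))"
  by (intro continuous_intros linear_continuous_on matrix_vector_mul_linear)


lemma quad_neg_const:
  fixes a q :: real
  assumes "\<And>t. 2*t*a + t^2 * q \<le> 0" shows "a = 0"
proof -
  define t where "t = a / (\<bar>q\<bar> + 1)"
  have pos: "\<bar>q\<bar> + 1 > 0" by simp
  have "2*t*a + t^2 * q \<le> 0" by (rule assms)
  hence "(2*t*a + t^2 * q) * (\<bar>q\<bar> + 1)^2 \<le> 0" by (simp add: mult_nonpos_nonneg)
  moreover have "(2*t*a + t^2 * q) * (\<bar>q\<bar> + 1)^2 = 2*a*(t*(\<bar>q\<bar> + 1))*(\<bar>q\<bar> + 1) + (t*(\<bar>q\<bar> + 1))^2*q"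
    by (simp add: algebra_simps power2_eq_square)
  moreover have "t*(\<bar>q\<bar> + 1) = a" unfolding t_def using pos by simp
  ultimately have "2*a*a*(\<bar>q\<bar> + 1) + a^2*q \<le> 0" by simp
  moreover have "2*a*a*(\<bar>q\<bar> + 1) + a^2*q = a^2 * (2*\<bar>q\<bar> + 2 + q)" by (simp add: algebra_simps power2_eq_square)
  ultimately have "a^2 * (2*\<bar>q\<bar> + 2 + q) \<le> 0" by simp
  moreover have "2*\<bar>q\<bar> + 2 + q > 0" by linarith
  ultimately have "a^2 \<le> 0" by (simp add: mult_le_0_iff)
  thus ?thesis by simp
qed

lemma spectral_subspace:
  fixes G :: "real^'n^'n"
  assumes sym: "transpose G = G"
  shows "subspace S \<Longrightarrow> (\<And>x. x \<in> S \<Longrightarrow> G *v x \<in> S) \<Longrightarrow>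
     \<exists>B. B \<subseteq> S \<and> finite B \<and> pairwise orthogonal B \<and> (\<forall>x\<in>B. norm x = 1) \<and> span B = S
        \<and> (\<forall>x\<in>B. \<exists>c. G *v x = c *\<^sub>R x)"
proof (induction "dim S" arbitrary: S rule: less_induct)
  case less
  show ?case
  proof (cases "S = {0}")
    case True then show ?thesis by (intro exI[of _ "{}"]) auto
  next
    case False
    then obtain y where y: "y \<in> S" "y \<noteq> 0" using less.prems subspace_0 by blast
    let ?K = "S \<inter> sphere 0 1"
    have cK: "compact ?K" using closed_subspace[OF less.prems(1)] compact_sphere
      by (simp add: closed_Int_compact)
    have "(1/norm y) *\<^sub>R y \<in> ?K" using y less.prems(1) by (auto simp: subspace_scale)
    hence neK: "?K \<noteq> {}" by blast
    obtain x0 where x0: "x0 \<in> ?K" and mx: "\<forall>z\<in>?K. z \<bullet> (G *v z) \<le> x0 \<bullet> (G *v x0)"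
      using continuous_attains_sup[OF cK neK cont_quad] by blast
    define lam where "lam = x0 \<bullet> (G *v x0)"
    have x0S: "x0 \<in> S" and nx0: "norm x0 = 1" using x0 by auto
    have x0x0: "x0 \<bullet> x0 = 1" using nx0 by (simp add: dot_square_norm)
    have ray: "w \<bullet> (G *v w) \<le> lam * (w \<bullet> w)" if "w \<in> S" for w
    proof (cases "w = 0")
      case True then show ?thesis by simp
    next
      case False
      have "(1/norm w) *\<^sub>R w \<in> ?K" using that False less.prems(1) by (auto simp: subspace_scale)
      hence "((1/norm w) *\<^sub>R w) \<bullet> (G *v ((1/norm w) *\<^sub>R w)) \<le> lam" using mx lam_def by blast
      hence "(1/norm w)^2 * (w \<bullet> (G *v w)) \<le> lam" by (simp only: quad_scale)
      hence "(w \<bullet> (G *v w)) \<le> lam * (norm w)^2" using False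
        by (simp add: field_simps power2_eq_square)
      thus ?thesis by (simp add: power2_norm_eq_inner)
    qed
    have key: "z \<bullet> (G *v x0) = 0" if zS: "z \<in> S" and zo: "z \<bullet> x0 = 0" for z
    proof (rule quad_neg_const)
      fix t :: real
      have wS: "x0 + t *\<^sub>R z \<in> S" using zS x0S less.prems(1) by (simp add: subspace_add subspace_scale)
      have s: "x0 \<bullet> (G *v z) = z \<bullet> (G *v x0)" using symm_inner[OF sym] by (simp add: inner_commute)
      have "(x0 + t *\<^sub>R z) \<bullet> (G *v (x0 + t *\<^sub>R z)) = lam + 2*t*(z \<bullet> (G *v x0)) + t^2 * (z \<bullet> (G *v z))"
        by (simp add: mv_add mv_scale inner_add_left inner_add_right s lam_def power2_eq_square algebra_simps)
      moreover have "(x0 + t *\<^sub>R z) \<bullet> (x0 + t *\<^sub>R z) = 1 + t^2 * (z \<bullet> z)"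
        using zo x0x0 by (simp add: inner_add_left inner_add_right inner_commute power2_eq_square algebra_simps)
      ultimately have "lam + 2*t*(z \<bullet> (G *v x0)) + t^2 * (z \<bullet> (G *v z)) \<le> lam * (1 + t^2 * (z \<bullet> z))"
        using ray[OF wS] by simp
      thus "2*t*(z \<bullet> (G *v x0)) + t^2 * (z \<bullet> (G *v z) - lam * (z \<bullet> z)) \<le> 0"
        by (simp add: algebra_simps)
    qed
    define zz where "zz = G *v x0 - lam *\<^sub>R x0"
    have zzS: "zz \<in> S" unfolding zz_def using less.prems x0S by (simp add: subspace_diff subspace_scale)
    have "zz \<bullet> x0 = 0" unfolding zz_def using x0x0 by (simp add: inner_diff_left inner_diff_right lam_def inner_commute)
    hence "zz \<bullet> (G *v x0) = 0" using key zzS by blast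
    hence "zz \<bullet> zz = 0" using \<open>zz \<bullet> x0 = 0\<close> unfolding zz_def[symmetric]
      by (simp add: zz_def inner_diff_right inner_diff_left algebra_simps) 
    hence ev: "G *v x0 = lam *\<^sub>R x0" unfolding zz_def by simp
    define S' where "S' = {z \<in> S. z \<bullet> x0 = 0}"
    have sub': "subspace S'" unfolding S'_def using less.prems(1)
      by (auto simp: subspace_def inner_add_left)
    have inv': "G *v z \<in> S'" if "z \<in> S'" for z
    proof -
      have "(G *v z) \<bullet> x0 = z \<bullet> (G *v x0)" using symm_inner[OF sym] by simp
      also have "\<dots> = 0" using that ev by (simp add: S'_def)
      finally show ?thesis using that less.prems(2) unfolding S'_def by auto
    qed
    have "span S' \<subset> span S"
    proof -
      have "S' \<subseteq> S" unfolding S'_def by auto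
      moreover have "x0 \<notin> S'" using x0x0 unfolding S'_def by auto
      moreover have "span S' = S'" using sub' by (rule span_eq_iff[THEN iffD2])
      moreover have "span S = S" using less.prems(1) by (rule span_eq_iff[THEN iffD2])
      ultimately show ?thesis using x0S by (metis psubsetI)
    qed
    hence "dim S' < dim S" by (rule dim_psubset)
    then obtain B' where B': "B' \<subseteq> S'" "finite B'" "pairwise orthogonal B'" "\<forall>x\<in>B'. norm x = 1"
      "span B' = S'" "\<forall>x\<in>B'. \<exists>c. G *v x = c *\<^sub>R x"
      using less.hyps[OF _ sub' inv'] by blast
    show ?thesis
    proof (intro exI[of _ "insert x0 B'"] conjI)
      show "insert x0 B' \<subseteq> S" using B'(1) x0S unfolding S'_def by auto
      show "finite (insert x0 B')" using B' by auto
      show "pairwise orthogonal (insert x0 B')" using B'(1,3) unfolding pairwise_def orthogonal_def S'_def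
        by (auto simp: inner_commute)
      show "\<forall>x\<in>insert x0 B'. norm x = 1" using B' nx0 by auto
      show "\<forall>x\<in>insert x0 B'. \<exists>c. G *v x = c *\<^sub>R x" using B' ev by auto
      show "span (insert x0 B') = S"
      proof
        show "span (insert x0 B') \<subseteq> S" using B'(1) x0S less.prems(1) unfolding S'_def
          by (intro span_minimal) auto
        show "S \<subseteq> span (insert x0 B')"
        proof
          fix w assume wS: "w \<in> S"
          have "w - (w \<bullet> x0) *\<^sub>R x0 \<in> S'" unfolding S'_def using wS x0S less.prems(1) x0x0
            by (simp add: subspace_diff subspace_scale inner_diff_left)
          hence "w - (w \<bullet> x0) *\<^sub>R x0 \<in> span (insert x0 B')" using B'(5) span_mono[of B' "insert x0 B'"] by auto
          moreover have "(w \<bullet> x0) *\<^sub>R x0 \<in> span (insert x0 B')" by (simp add: span_base span_scale)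
          ultimately have "(w - (w \<bullet> x0) *\<^sub>R x0) + (w \<bullet> x0) *\<^sub>R x0 \<in> span (insert x0 B')"
            by (rule span_add)
          thus "w \<in> span (insert x0 B')" by simp
        qed
      qed
    qed
  qed
qed


lemma spectral_basis:
  fixes G :: "real^'n^'n"
  assumes sym: "transpose G = G"
  obtains v :: "'n \<Rightarrow> real^'n" and mu :: "'n \<Rightarrow> real"
  where "\<And>s t. v s \<bullet> v t = (if s = t then 1 else 0)" "\<And>t. G *v v t = mu t *\<^sub>R v t"
    "\<And>x. (\<Sum>t\<in>UNIV. (x \<bullet> v t) *\<^sub>R v t) = x"
proof -
  obtain B where B: "finite B" "pairwise orthogonal B" "\<forall>x\<in>B. norm x = 1" "span B = UNIV"
     "\<forall>x\<in>B. \<exists>c. G *v x = c *\<^sub>R x"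
    using spectral_subspace[OF sym, of UNIV] by auto
  have "0 \<notin> B" using B(3) by force
  hence ind: "independent B" using B(2) pairwise_orthogonal_independent by blast
  have "card B = dim (UNIV :: (real^'n) set)"
    using ind B(4) by (metis dim_eq_card_independent dim_span)
  hence cB: "card B = CARD('n)" by (simp add: dim_UNIV)
  obtain h where h: "bij_betw h (UNIV :: 'n set) B"
    using finite_same_card_bij[of "UNIV :: 'n set" B] B(1) cB by auto
  define mu where "mu t = (SOME c. G *v h t = c *\<^sub>R h t)" for t
  show ?thesis
  proof
    fix s t
    have "h s \<in> B" "h t \<in> B" using h bij_betwE by blast+
    moreover have "s \<noteq> t \<Longrightarrow> h s \<noteq> h t" using h by (meson bij_betw_imp_inj_on injD)
    ultimately show "h s \<bullet> h t = (if s = t then 1 else 0)"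
    proof (cases "s = t")
      case True thus ?thesis using B(3) \<open>h t \<in> B\<close> by (simp add: norm_eq_1)
    next
      case False thus ?thesis using B(2) \<open>h t \<in> B\<close> \<open>h s \<in> B\<close> \<open>s \<noteq> t \<Longrightarrow> h s \<noteq> h t\<close>
        unfolding pairwise_def orthogonal_def by simp
    qed
  next
    fix t
    have "h t \<in> B" using h bij_betwE by blast
    then show "G *v h t = mu t *\<^sub>R h t" unfolding mu_def using B(5) by (meson someI_ex)
  next
    fix x
    have "(\<Sum>i\<in>B. (x \<bullet> i) *\<^sub>R i) = x" using orthonormal_basis_expand[OF B(2) _ _ B(1)] B(3,4) by auto
    moreover have "(\<Sum>i\<in>B. (x \<bullet> i) *\<^sub>R i) = (\<Sum>t\<in>UNIV. (x \<bullet> h t) *\<^sub>R h t)"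
      using sum.reindex_bij_betw[OF h, of "\<lambda>i. (x \<bullet> i) *\<^sub>R i"] by simp
    ultimately show "(\<Sum>t\<in>UNIV. (x \<bullet> h t) *\<^sub>R h t) = x" by simp
  qed
qed


definition Lp :: "real^'n^'m \<Rightarrow> real poly^'n^'m" where "Lp A = (\<chi> i j. [:A$i$j:])"

lemma Lp_mult: "Lp (A ** B) = Lp A ** Lp B"
  by (simp add: Lp_def vec_eq_iff matrix_matrix_mult_def mult_to_poly sum_to_poly mult.commute)

lemma Lp_one: "Lp (mat 1 :: real^'n^'n) = mat 1"
  by (simp add: Lp_def vec_eq_iff mat_def)

lemma diag_sandwich:
  fixes A :: "'a::comm_ring_1^'n^'m" and B :: "'a^'p^'n"
  shows "(A ** (\<chi> i j. if i = j then d i else 0) ** B)$i$j = (\<Sum>k\<in>UNIV. A$i$k * d k * B$k$j)"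
proof -
  have "(A ** (\<chi> i j. if i = j then d i else 0))$i$k = A$i$k * d k" for i k
    by (simp add: matrix_matrix_mult_def if_distrib cong: if_cong)
  thus ?thesis by (simp add: matrix_matrix_mult_def)
qed

lemma cr_term: "(p::'a::comm_ring_1)*(x-q)*r = (p*r)*x - p*q*r" by (simp add: algebra_simps)

lemma poly_term: "[:a:]*(X-[:m:])*[:b:] = [:a*b:]*X - [:(a::real)*m*b:]"
proof -
  have "[:a:]*(X-[:m:])*[:b:] = ([:a:]*[:b:])*X - [:a:]*[:m:]*[:b:]" by (rule cr_term)
  thus ?thesis by (simp only: mult_to_poly)
qed

lemma charpoly_spectral:
  fixes G :: "real^'n^'n" and v :: "'n \<Rightarrow> real^'n"
  assumes orth: "\<And>s t. v s \<bullet> v t = (if s = t then 1 else 0)"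
    and ev: "\<And>t. G *v v t = mu t *\<^sub>R v t"
  shows "charpoly G = (\<Prod>t\<in>UNIV. [:- mu t, 1:])"
proof -
  define V :: "real^'n^'n" where "V = (\<chi> i t. v t $ i)"
  define D :: "real^'n^'n" where "D = (\<chi> i j. if i = j then mu i else 0)"
  have VtV: "transpose V ** V = mat 1"
    using orth by (simp add: vec_eq_iff matrix_matrix_mult_def V_def transpose_def mat_def inner_vec_def)
  hence VVt: "V ** transpose V = mat 1" using matrix_left_right_inverse by blast
  have GV: "G ** V = V ** D"
  proof -
    have "(G ** V)$i$t = (G *v v t)$i" for i t
      by (simp add: matrix_matrix_mult_def matrix_vector_mult_def V_def)
    moreover have "(V ** D)$i$t = mu t * v t $ i" for i t
      by (simp add: matrix_matrix_mult_def D_def V_def if_distrib cong: if_cong)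
    ultimately show ?thesis using ev by (simp add: vec_eq_iff)
  qed
  have G: "G = V ** D ** transpose V"
    by (metis GV VVt matrix_mul_assoc matrix_mul_rid)
  have Gij: "G$i$j = (\<Sum>k\<in>UNIV. v k $ i * mu k * v k $ j)" for i j
    using G diag_sandwich[of V mu "transpose V" i j] by (simp add: D_def V_def transpose_def)
  have Iij: "(\<Sum>k\<in>UNIV. v k $ i * v k $ j) = (if i = j then 1 else 0)" for i j
    using VVt by (simp add: vec_eq_iff matrix_matrix_mult_def V_def transpose_def mat_def)
  define X :: "real poly" where "X = [:0, 1:]"
  define Dp :: "real poly^'n^'n" where "Dp = (\<chi> i j. if i = j then X - [:mu i:] else 0)"
  have eq: "(\<chi> i j. (if i = j then [:0, 1:] else 0) - [:G$i$j:]) = Lp V ** Dp ** Lp (transpose V)"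
  proof -
    have "(Lp V ** Dp ** Lp (transpose V))$i$j = (if i = j then X else 0) - [:G$i$j:]" for i j
    proof -
      have "(Lp V ** Dp ** Lp (transpose V))$i$j = (\<Sum>k\<in>UNIV. [:v k $ i:] * (X - [:mu k:]) * [:v k $ j:])"
        unfolding Dp_def using diag_sandwich[of "Lp V" "\<lambda>k. X - [:mu k:]" "Lp (transpose V)" i j]
        by (simp add: Lp_def V_def transpose_def)
      also have "\<dots> = (\<Sum>k\<in>UNIV. [:v k $ i * v k $ j:] * X - [:v k $ i * mu k * v k $ j:])"
        by (intro sum.cong refl) (rule poly_term)
      also have "\<dots> = [:\<Sum>k\<in>UNIV. v k $ i * v k $ j:] * X - [:\<Sum>k\<in>UNIV. v k $ i * mu k * v k $ j:]"
        by (simp only: sum_subtractf sum_to_poly[symmetric] sum_distrib_right)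
      also have "\<dots> = (if i = j then X else 0) - [:G$i$j:]" by (simp add: Iij Gij)
      finally show ?thesis .
    qed
    thus ?thesis by (simp add: vec_eq_iff X_def)
  qed
  have "charpoly G = det (Lp V ** Dp ** Lp (transpose V))" unfolding charpoly_def eq ..
  also have "\<dots> = det (Lp V) * det Dp * det (Lp (transpose V))" by (simp only: det_mul)
  also have "\<dots> = det Dp * (det (Lp V) * det (Lp (transpose V)))" by (simp only: ac_simps)
  also have "\<dots> = det Dp * det (Lp V ** Lp (transpose V))" by (simp only: det_mul)
  also have "Lp V ** Lp (transpose V) = mat 1" by (simp add: Lp_mult[symmetric] VVt Lp_one)
  also have "det Dp = (\<Prod>t\<in>UNIV. X - [:mu t:])" by (subst det_diagonal) (auto simp: Dp_def)
  finally show ?thesis by (simp add: X_def)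
qed


lemma list_split_filter:
  fixes L :: "real list"
  assumes sr: "sorted (rev L)" and M: "0 < M" "M < length L" and gap: "L!M < L!(M-1)"
  shows "filter (\<lambda>x. L!(M-1) \<le> x) L = take M L" "filter (\<lambda>x. \<not> L!(M-1) \<le> x) L = drop M L"
proof -
  let ?c = "L!(M-1)"
  have top: "\<forall>x\<in>set (take M L). ?c \<le> x"
  proof
    fix x assume "x \<in> set (take M L)"
    then obtain j where j: "j < length (take M L)" "x = take M L ! j" by (auto simp: in_set_conv_nth)
    hence "j \<le> M - 1" "M - 1 < length L" using M by auto
    thus "?c \<le> x" using j sorted_rev_nth_mono[OF sr] by auto
  qed
  have bot: "\<forall>x\<in>set (drop M L). \<not> ?c \<le> x"
  proof
    fix x assume "x \<in> set (drop M L)"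
    then obtain j where j: "j < length (drop M L)" "x = drop M L ! j" by (auto simp: in_set_conv_nth)
    hence "x = L!(M+j)" "M + j < length L" using M by auto
    hence "x \<le> L!M" using sorted_rev_nth_mono[OF sr, of M "M+j"] by auto
    thus "\<not> ?c \<le> x" using gap by auto
  qed
  have L: "L = take M L @ drop M L" by simp
  show "filter (\<lambda>x. ?c \<le> x) L = take M L"
    by (subst L, simp only: filter_append) (use top bot in \<open>auto intro: filter_True filter_False\<close>)
  show "filter (\<lambda>x. \<not> ?c \<le> x) L = drop M L"
    by (subst L, simp only: filter_append) (use top bot in \<open>auto intro: filter_True filter_False\<close>)
qed

lemma eig_facts:
  fixes G :: "real^'n^'n" and mu :: "'n \<Rightarrow> real"
  assumes cp: "charpoly G = (\<Prod>t\<in>UNIV. [:- mu t, 1:])"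
    and M: "0 < M" "M < CARD('n)" and gap: "eigval G (M+1) < eigval G M"
  defines "c \<equiv> eigval G M"
  shows "card {t. c \<le> mu t} = M"
    "(\<Sum>i = M + 1..CARD('n). eigval G i) = (\<Sum>t\<in>{t. \<not> c \<le> mu t}. mu t)"
    "\<And>i. i \<in> {1..M} \<Longrightarrow> c \<le> eigval G i"
    "\<And>t. c \<le> mu t \<Longrightarrow> \<exists>i\<in>{1..M}. eigval G i = mu t"
    "\<exists>t. mu t = c"
proof -
  define Mu where "Mu = image_mset mu (mset_set (UNIV :: 'n set))"
  have pr: "proots (charpoly G) = Mu"
    unfolding cp Mu_def by (subst proots_prod) (auto simp: sum_unfold_sum_mset)
  define L where "L = eigvals_desc G"
  have L: "L = rev (sorted_list_of_multiset Mu)" unfolding L_def eigvals_desc_def pr ..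
  have mL: "mset L = Mu" unfolding L by simp
  have lenL: "length L = CARD('n)" using arg_cong[OF mL, of size] by (simp add: Mu_def)
  have sr: "sorted (rev L)" unfolding L by simp
  have ev: "eigval G i = L!(i-1)" for i unfolding eigval_def L_def ..
  have gapL: "L!M < L!(M-1)" using gap by (simp add: ev)
  have cL: "c = L!(M-1)" unfolding c_def ev ..
  note spl = list_split_filter[OF sr M(1) _ gapL, unfolded lenL, OF M(2), folded cL]
  have fm: "filter_mset P Mu = image_mset mu (mset_set {t. P (mu t)})" for P
    unfolding Mu_def by (simp add: filter_mset_image_mset filter_mset_mset_set)
  show "card {t. c \<le> mu t} = M"
  proof -
    have "size (filter_mset (\<lambda>x. c \<le> x) Mu) = length (filter (\<lambda>x. c \<le> x) L)"
      by (metis mL mset_filter size_mset)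
    thus ?thesis unfolding spl fm using M lenL by simp
  qed
  show "(\<Sum>i = M + 1..CARD('n). eigval G i) = (\<Sum>t\<in>{t. \<not> c \<le> mu t}. mu t)"
  proof -
    have "(\<Sum>t\<in>{t. \<not> c \<le> mu t}. mu t) = sum_mset (filter_mset (\<lambda>x. \<not> c \<le> x) Mu)"
      by (simp add: fm sum_unfold_sum_mset)
    also have "\<dots> = sum_list (filter (\<lambda>x. \<not> c \<le> x) L)"
      by (metis mL mset_filter sum_mset_sum_list)
    also have "\<dots> = sum_list (drop M L)" using spl by simp
    also have "\<dots> = (\<Sum>j=0..<CARD('n) - M. L!(M+j))"
      by (simp add: sum_list_sum_nth lenL)
    also have "\<dots> = (\<Sum>i = M + 1..CARD('n). eigval G i)"
    proof -
      have "(\<Sum>i = M + 1..CARD('n). eigval G i) = (\<Sum>i = M + 1..CARD('n). L!(i-1))" by (simp add: ev)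
      also have "\<dots> = (\<Sum>j=0..<CARD('n) - M. L!(M+j))"
        by (rule sum.reindex_bij_witness[of _ "\<lambda>j. j + M + 1" "\<lambda>i. i - M - 1"]) (use M in auto)
      finally show ?thesis by simp
    qed
    finally show ?thesis by simp
  qed
  show "c \<le> eigval G i" if "i \<in> {1..M}" for i
    using that sorted_rev_nth_mono[OF sr, of "i-1" "M-1"] M lenL unfolding cL ev by auto
  show "\<exists>i\<in>{1..M}. eigval G i = mu t" if "c \<le> mu t" for t
  proof -
    have "set L = set_mset Mu" using mL by (metis set_mset_mset)
    hence "mu t \<in> set L" by (simp add: Mu_def)
    then obtain j where j: "j < length L" "L!j = mu t" by (auto simp: in_set_conv_nth)
    have "j < M"
    proof (rule ccontr)
      assume "\<not> j < M"
      hence "L!j \<le> L!M" using sorted_rev_nth_mono[OF sr, of M j] j by auto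
      thus False using that gapL cL j by auto
    qed
    thus ?thesis using j by (intro bexI[of _ "j+1"]) (auto simp: ev)
  qed
  show "\<exists>t. mu t = c"
  proof -
    have "set L = set_mset Mu" using mL by (metis set_mset_mset)
    moreover have "c \<in> set L" unfolding cL using M lenL by simp
    ultimately show ?thesis by (auto simp: Mu_def)
  qed
qed


lemma mv_adjoint: "((A::real^'n^'m) *v x) \<bullet> y = x \<bullet> (transpose A *v y)"
  by (metis dot_lmul_matrix vector_transpose_matrix)

locale spec =
  fixes G :: "real^'n^'n" and v :: "'n \<Rightarrow> real^'n" and mu :: "'n \<Rightarrow> real"
  assumes sym: "transpose G = G"
    and orth: "\<And>s t. v s \<bullet> v t = (if s = t then 1 else 0)"
    and ev: "\<And>t. G *v v t = mu t *\<^sub>R v t"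
    and expand: "\<And>x. (\<Sum>t\<in>UNIV. (x \<bullet> v t) *\<^sub>R v t) = x"
begin

lemma inner_expand: "x \<bullet> y = (\<Sum>t\<in>UNIV. (x \<bullet> v t) * (y \<bullet> v t))"
proof -
  have "x \<bullet> y = x \<bullet> (\<Sum>t\<in>UNIV. (y \<bullet> v t) *\<^sub>R v t)" using expand by simp
  also have "\<dots> = (\<Sum>t\<in>UNIV. (y \<bullet> v t) * (x \<bullet> v t))" by (simp add: inner_sum_right)
  finally show ?thesis by (simp add: mult.commute)
qed

lemma Gv_inner: "(G *v x) \<bullet> v t = mu t * (x \<bullet> v t)"
  using symm_inner[OF sym, of "v t" x] ev by (simp add: inner_commute)

lemma quad: "x \<bullet> (G *v x) = (\<Sum>t\<in>UNIV. mu t * (x \<bullet> v t)^2)"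
  using inner_expand[of x "G *v x"] by (simp add: Gv_inner power2_eq_square mult_ac)

lemma parseval: "x \<bullet> x = (\<Sum>t\<in>UNIV. (x \<bullet> v t)^2)"
  using inner_expand[of x x] by (simp add: power2_eq_square)

lemma v_norm: "v t \<bullet> v t = 1" using orth by simp

lemma v_inj: "inj v"
proof (rule injI)
  fix s t assume "v s = v t"
  hence "v s \<bullet> v t = 1" using v_norm by simp
  thus "s = t" using orth[of s t] by (auto split: if_splits)
qed

lemma frob_sq:
  fixes Tm :: "real^'n^'d" and E :: "real^'n^'n"
  assumes GT: "G = transpose Tm ** Tm"
  shows "(frob_norm (Tm ** E))^2 = (\<Sum>t\<in>UNIV. mu t * ((transpose E *v v t) \<bullet> (transpose E *v v t)))"
proof -
  have "(frob_norm (Tm ** E))^2 = (\<Sum>i\<in>UNIV. \<Sum>j\<in>UNIV. ((Tm ** E)$i$j)^2)"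
    unfolding frob_norm_def by (simp add: sum_nonneg)
  also have "\<dots> = (\<Sum>j\<in>UNIV. \<Sum>i\<in>UNIV. ((Tm *v column j E)$i)^2)"
    by (subst sum.swap) (simp add: matrix_matrix_mult_def matrix_vector_mult_def column_def)
  also have "\<dots> = (\<Sum>j\<in>UNIV. column j E \<bullet> (G *v column j E))"
  proof (intro sum.cong refl)
    fix j
    have "(\<Sum>i\<in>UNIV. ((Tm *v column j E)$i)^2) = (Tm *v column j E) \<bullet> (Tm *v column j E)"
      by (simp add: inner_vec_def power2_eq_square)
    also have "\<dots> = column j E \<bullet> (G *v column j E)"
      by (simp add: GT mv_adjoint matrix_vector_mul_assoc)
    finally show "(\<Sum>i\<in>UNIV. ((Tm *v column j E)$i)^2) = column j E \<bullet> (G *v column j E)" .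
  qed
  also have "\<dots> = (\<Sum>j\<in>UNIV. \<Sum>t\<in>UNIV. mu t * (column j E \<bullet> v t)^2)" by (simp add: quad)
  also have "\<dots> = (\<Sum>t\<in>UNIV. mu t * (\<Sum>j\<in>UNIV. (column j E \<bullet> v t)^2))"
    by (subst sum.swap) (simp add: sum_distrib_left)
  also have "\<dots> = (\<Sum>t\<in>UNIV. mu t * ((transpose E *v v t) \<bullet> (transpose E *v v t)))"
  proof -
    have "(transpose E *v v t)$j = column j E \<bullet> v t" for j t
      by (simp add: matrix_vector_mult_def transpose_def column_def inner_vec_def)
    thus ?thesis by (simp add: inner_vec_def power2_eq_square)
  qed
  finally show ?thesis .
qed

end

context spec begin

lemma eigenspace_eq:
  assumes c1: "\<And>i. i \<in> {1..M} \<Longrightarrow> c \<le> eigval G i"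
    and c2: "\<And>t. c \<le> mu t \<Longrightarrow> \<exists>i\<in>{1..M}. eigval G i = mu t"
  shows "top_eigenspace G M = span (v ` {t. c \<le> mu t})"
proof -
  let ?K = "{t. c \<le> mu t}"
  let ?Gen = "{y. \<exists>i\<in>{1..M}. G *v y = eigval G i *\<^sub>R y}"
  have "v ` ?K \<subseteq> ?Gen"
  proof
    fix y assume "y \<in> v ` ?K"
    then obtain t where t: "c \<le> mu t" "y = v t" by auto
    then obtain i where "i\<in>{1..M}" "eigval G i = mu t" using c2 by blast
    thus "y \<in> ?Gen" using t ev by (metis (mono_tags, lifting) mem_Collect_eq)
  qed
  hence 1: "span (v ` ?K) \<subseteq> top_eigenspace G M" unfolding top_eigenspace_def by (rule span_mono)
  have "?Gen \<subseteq> span (v ` ?K)"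
  proof
    fix y assume "y \<in> ?Gen"
    then obtain i where i: "i\<in>{1..M}" "G *v y = eigval G i *\<^sub>R y" by auto
    have z: "y \<bullet> v t = 0" if "t \<notin> ?K" for t
    proof -
      have a: "(G *v y) \<bullet> v t = mu t * (y \<bullet> v t)" by (rule Gv_inner)
      have b: "(G *v y) \<bullet> v t = eigval G i * (y \<bullet> v t)" using i(2) by simp
      from a b have "mu t * (y \<bullet> v t) = eigval G i * (y \<bullet> v t)" by (simp only:)
      moreover have "mu t < eigval G i" using that c1[OF i(1)] by auto
      ultimately show ?thesis by auto
    qed
    have "y = (\<Sum>t\<in>UNIV. (y \<bullet> v t) *\<^sub>R v t)" using expand by simp
    also have "\<dots> = (\<Sum>t\<in>?K. (y \<bullet> v t) *\<^sub>R v t)"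
      by (rule sum.mono_neutral_right) (use z in auto)
    also have "\<dots> \<in> span (v ` ?K)" by (intro span_sum span_scale span_base) auto
    finally show "y \<in> span (v ` ?K)" .
  qed
  hence 2: "top_eigenspace G M \<subseteq> span (v ` ?K)" unfolding top_eigenspace_def
    by (rule span_minimal[OF _ subspace_span])
  show ?thesis using 1 2 by blast
qed

lemma indep_vK: "independent (v ` K)" "card (v ` K) = card K" "dim (span (v ` K)) = card K"
proof -
  have "pairwise orthogonal (v ` K)" using orth v_inj
    by (auto simp: pairwise_def orthogonal_def)
  moreover have "0 \<notin> v ` K"
  proof
    assume "0 \<in> v ` K" then obtain t where "v t = 0" by auto
    thus False using v_norm[of t] by simp
  qed
  ultimately show ind: "independent (v ` K)" using pairwise_orthogonal_independent by blast
  show cK: "card (v ` K) = card K" using v_inj by (simp add: card_image inj_on_subset)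
  show "dim (span (v ` K)) = card K" using ind cK by (simp add: dim_eq_card_independent)
qed

lemma parseval_U:
  assumes "finite U" "\<And>u. u \<in> U \<Longrightarrow> u \<bullet> u = 1"
  shows "(\<Sum>t\<in>UNIV. \<Sum>u\<in>U. (v t \<bullet> u)^2) = real (card U)"
proof -
  have "(\<Sum>t\<in>UNIV. \<Sum>u\<in>U. (v t \<bullet> u)^2) = (\<Sum>u\<in>U. \<Sum>t\<in>UNIV. (u \<bullet> v t)^2)"
    by (subst sum.swap) (simp add: inner_commute)
  also have "\<dots> = (\<Sum>u\<in>U. 1)" by (intro sum.cong refl) (simp add: parseval[symmetric] assms)
  finally show ?thesis by simp
qed

end

lemma proj_formula:
  fixes U :: "(real^'n) set"
  assumes fin: "finite U" and po: "pairwise orthogonal U" and n1: "\<And>u. u \<in> U \<Longrightarrow> norm u = 1"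
    and xn: "x \<bullet> x = 1" and w: "w \<in> span U"
  shows "(w - x) \<bullet> (w - x) = 1 - (\<Sum>u\<in>U. (x \<bullet> u)^2) + (\<Sum>u\<in>U. (w \<bullet> u - x \<bullet> u)^2)"
proof -
  have wexp: "w = (\<Sum>u\<in>U. (w \<bullet> u) *\<^sub>R u)" using orthonormal_basis_expand[OF po n1 w fin] by simp
  have uu: "u \<bullet> u' = (if u = u' then 1 else 0)" if "u \<in> U" "u' \<in> U" for u u'
    using that po n1 by (auto simp: pairwise_def orthogonal_def norm_eq_1)
  have ww: "w \<bullet> w = (\<Sum>u\<in>U. (w \<bullet> u)^2)"
  proof -
    have "w \<bullet> w = w \<bullet> (\<Sum>u\<in>U. (w \<bullet> u) *\<^sub>R u)" using wexp by simp
    thus ?thesis by (simp add: inner_sum_right power2_eq_square)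
  qed
  have wx: "w \<bullet> x = (\<Sum>u\<in>U. (w \<bullet> u) * (x \<bullet> u))"
  proof -
    have "w \<bullet> x = (\<Sum>u\<in>U. (w \<bullet> u) *\<^sub>R u) \<bullet> x" using wexp by simp
    also have "\<dots> = (\<Sum>u\<in>U. (w \<bullet> u) * (u \<bullet> x))" by (simp add: inner_sum_left)
    finally show ?thesis by (simp add: inner_commute)
  qed
  have "(w - x) \<bullet> (w - x) = w \<bullet> w - 2 * (w \<bullet> x) + x \<bullet> x"
    by (simp add: inner_diff_left inner_diff_right inner_commute)
  also have "\<dots> = (\<Sum>u\<in>U. (w \<bullet> u)^2) - 2 * (\<Sum>u\<in>U. (w \<bullet> u) * (x \<bullet> u)) + 1" using ww wx xn by simp
  also have "\<dots> = 1 - (\<Sum>u\<in>U. (x \<bullet> u)^2) + (\<Sum>u\<in>U. (w \<bullet> u - x \<bullet> u)^2)"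
    by (simp add: power2_diff sum.distrib sum_subtractf sum_distrib_left algebra_simps)
  finally show ?thesis .
qed


lemma mm_diff: "(A::real^'n^'m) ** (B - C) = A ** B - A ** C"
  by (simp add: vec_eq_iff matrix_matrix_mult_def sum_subtractf right_diff_distrib)

lemma err_eq: "(Tm::real^'n^'d) ** B - Tm = Tm ** (B - mat 1)"
  by (simp add: mm_diff)

lemma transpose_diff_mv: "transpose ((B::real^'n^'n) - mat 1) *v y = transpose B *v y - y"
proof -
  have "transpose (B - mat 1) = transpose B - mat 1"
    by (simp add: vec_eq_iff transpose_def mat_def)
  thus ?thesis by (simp add: matrix_vector_mult_diff_rdistrib)
qed

context spec begin

lemma err_formula:
  fixes Tm :: "real^'n^'d"
  assumes GT: "G = transpose Tm ** Tm"
  shows "(frob_norm (Tm ** B - Tm))^2 = (\<Sum>t\<in>UNIV. mu t * ((transpose B *v v t - v t) \<bullet> (transpose B *v v t - v t)))"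
  using frob_sq[OF GT, of "B - mat 1"] by (simp only: err_eq transpose_diff_mv)

lemma proj_B:
  assumes "\<And>i j. B$i$j = (\<Sum>t\<in>K. v t $ i * v t $ j)"
  shows "transpose B *v v s = (if s \<in> K then v s else 0)"
proof -
  have "(transpose B *v v s)$i = (if s \<in> K then v s $ i else 0)" for i
  proof -
    have "(transpose B *v v s)$i = (\<Sum>j\<in>UNIV. (\<Sum>t\<in>K. v t $ j * v t $ i) * v s $ j)"
      by (simp add: matrix_vector_mult_def transpose_def assms)
    also have "\<dots> = (\<Sum>j\<in>UNIV. \<Sum>t\<in>K. v t $ i * (v t $ j * v s $ j))"
      by (intro sum.cong refl) (simp add: sum_distrib_left mult_ac)
    also have "\<dots> = (\<Sum>t\<in>K. v t $ i * (\<Sum>j\<in>UNIV. v t $ j * v s $ j))"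
      by (subst sum.swap) (simp add: sum_distrib_left)
    also have "\<dots> = (\<Sum>t\<in>K. v t $ i * (v t \<bullet> v s))" by (simp add: inner_vec_def)
    also have "\<dots> = (\<Sum>t\<in>K. if t = s then v s $ i else 0)" by (intro sum.cong refl) (simp add: orth)
    also have "\<dots> = (if s \<in> K then v s $ i else 0)" by (simp add: sum.delta')
    finally show ?thesis .
  qed
  thus ?thesis by (simp add: vec_eq_iff)
qed

end

context spec begin

lemma backward:
  fixes x :: "'m::finite \<Rightarrow> real^'n" and Tm :: "real^'n^'d"
  assumes GT: "G = transpose Tm ** Tm" and kp: "\<kappa> > 0"
    and cK: "card K = CARD('m)"
    and xinj: "inj x" and xind: "independent (range x)" and xS: "\<forall>m. x m \<in> span (v ` K)"
    and xpos: "\<forall>m k. x m $ k > 0"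
  shows "\<exists>(A :: real^'m^'n) (Wd :: real^'n^'m).
     (frob_norm (Tm ** softmax_enc \<kappa> A ** Wd - Tm))^2 = (\<Sum>t\<in>{t. t \<notin> K}. mu t)"
proof -
  define s where "s m = (\<Sum>k\<in>UNIV. x m $ k)" for m
  have spos: "s m > 0" for m unfolding s_def using xpos by (intro sum_pos) auto
  define p where "p m = (1 / s m) *\<^sub>R x m" for m
  have ppos: "p m $ k > 0" for m k unfolding p_def using xpos spos by simp
  have psum: "(\<Sum>k\<in>UNIV. p m $ k) = 1" for m
    unfolding p_def using spos[of m] by (simp add: sum_divide_distrib[symmetric] s_def)
  define A :: "real^'m^'n" where "A = (\<chi> k m. \<kappa> * ln (p m $ k))"
  define We :: "real^'m^'n" where "We = (\<chi> k m. p m $ k)"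
  have We: "softmax_enc \<kappa> A = We"
  proof -
    have "(1/\<kappa>) * (\<kappa> * ln (p m $ k)) = ln (p m $ k)" for m k using kp by simp
    hence e: "exp ((1/\<kappa>) * (\<kappa> * ln (p m $ k))) = p m $ k" for m k using ppos by simp
    show ?thesis unfolding softmax_enc_def softmax_def We_def A_def
      using kp ppos by (simp add: vec_eq_iff transpose_def column_def psum)
  qed
  have sub: "span (v ` K) \<subseteq> span (range x)"
  proof (rule card_ge_dim_independent)
    show "range x \<subseteq> span (v ` K)" using xS by auto
    show "independent (range x)" by (rule xind)
    show "dim (span (v ` K)) \<le> card (range x)"
      using indep_vK(3)[of K] cK card_image[OF xinj] by simp
  qed
  have "\<forall>t\<in>K. \<exists>a. v t = (\<Sum>m\<in>UNIV. a m *\<^sub>R x m)"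
  proof
    fix t assume "t \<in> K"
    hence "v t \<in> span (range x)" using sub span_base[of "v t" "v ` K"] by auto
    then obtain u where u: "v t = (\<Sum>y\<in>range x. u y *\<^sub>R y)" using span_finite[of "range x"] by auto
    also have "\<dots> = (\<Sum>m\<in>UNIV. u (x m) *\<^sub>R x m)" using sum.reindex[OF xinj, of "\<lambda>y. u y *\<^sub>R y"] by simp
    finally show "\<exists>a. v t = (\<Sum>m\<in>UNIV. a m *\<^sub>R x m)" by (intro exI[of _ "\<lambda>m. u (x m)"])
  qed
  then obtain a where a: "\<And>t. t \<in> K \<Longrightarrow> v t = (\<Sum>m\<in>UNIV. a t m *\<^sub>R x m)" by metis
  define Wd :: "real^'n^'m" where "Wd = (\<chi> m j. \<Sum>t\<in>K. a t m * s m * v t $ j)"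
  have Bij: "(We ** Wd)$i$j = (\<Sum>t\<in>K. v t $ i * v t $ j)" for i j
  proof -
    have xs: "x m $ i = s m * p m $ i" for m unfolding p_def using spos[of m] by simp
    have "(We ** Wd)$i$j = (\<Sum>m\<in>UNIV. p m $ i * (\<Sum>t\<in>K. a t m * s m * v t $ j))"
      by (simp add: matrix_matrix_mult_def We_def Wd_def)
    also have "\<dots> = (\<Sum>t\<in>K. (\<Sum>m\<in>UNIV. a t m * x m $ i) * v t $ j)"
      by (simp add: sum_distrib_left sum_distrib_right xs mult_ac) (rule sum.swap)
    also have "\<dots> = (\<Sum>t\<in>K. v t $ i * v t $ j)"
    proof (intro sum.cong refl)
      fix t assume "t \<in> K"
      have "v t $ i = (\<Sum>m\<in>UNIV. a t m * x m $ i)" using a[OF \<open>t \<in> K\<close>] by simp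
      thus "(\<Sum>m\<in>UNIV. a t m * x m $ i) * v t $ j = v t $ i * v t $ j" by simp
    qed
    finally show ?thesis .
  qed
  have "(frob_norm (Tm ** softmax_enc \<kappa> A ** Wd - Tm))^2 = (frob_norm (Tm ** (We ** Wd) - Tm))^2"
    by (simp add: We matrix_mul_assoc)
  also have "\<dots> = (\<Sum>t\<in>UNIV. mu t * ((transpose (We ** Wd) *v v t - v t) \<bullet> (transpose (We ** Wd) *v v t - v t)))"
    by (rule err_formula[OF GT])
  also have "\<dots> = (\<Sum>t\<in>UNIV. if t \<in> K then 0 else mu t)"
    unfolding proj_B[OF Bij] by (intro sum.cong refl) (simp add: v_norm)
  also have "\<dots> = (\<Sum>t\<in>{t. t \<notin> K}. mu t)"
    by (simp add: sum.If_cases Collect_neg_eq Compl_eq_Diff_UNIV)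
  finally show ?thesis by blast
qed

end

lemma gap_ineq:
  fixes mu p e :: "'n::finite \<Rightarrow> real"
  assumes K: "K = {t. c \<le> mu t}" and cpos: "c > 0" and mupos: "\<forall>t. mu t > 0"
    and p01: "\<forall>t. 0 \<le> p t \<and> p t \<le> 1" and psum: "(\<Sum>t\<in>UNIV. p t) \<le> real (card K)"
    and e0: "\<forall>t. e t \<ge> 0"
    and eq: "(\<Sum>t\<in>UNIV. mu t * (1 - p t + e t)) = (\<Sum>t\<in>-K. mu t)"
  shows "\<forall>t. e t = 0" "\<forall>t\<in>K. p t = 1" "\<forall>t. t \<notin> K \<longrightarrow> p t = 0"
proof -
  have split: "(\<Sum>t\<in>UNIV. f t) = (\<Sum>t\<in>K. f t) + (\<Sum>t\<in>-K. f t)" for f :: "'n \<Rightarrow> real"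
    using sum.subset_diff[of K UNIV f] by (simp add: Compl_eq_Diff_UNIV add.commute)
  define T1 where "T1 = (\<Sum>t\<in>K. (mu t - c) * (1 - p t))"
  define T2 where "T2 = c * (real (card K) - (\<Sum>t\<in>UNIV. p t))"
  define T3 where "T3 = (\<Sum>t\<in>-K. (c - mu t) * p t)"
  define E where "E = (\<Sum>t\<in>UNIV. mu t * e t)"
  have T1: "T1 \<ge> 0" unfolding T1_def using K p01 by (intro sum_nonneg) auto
  have T2: "T2 \<ge> 0" unfolding T2_def using cpos psum by simp
  have T3: "T3 \<ge> 0" unfolding T3_def using K p01 by (intro sum_nonneg) auto
  have E: "E \<ge> 0" unfolding E_def using mupos e0 by (intro sum_nonneg) (simp add: less_imp_le)
  have i1: "T1 = (\<Sum>t\<in>K. mu t * (1 - p t)) - c * real (card K) + c * (\<Sum>t\<in>K. p t)"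
    unfolding T1_def by (simp add: algebra_simps sum_subtractf sum.distrib sum_distrib_left)
  have i2: "T2 = c * real (card K) - c * (\<Sum>t\<in>K. p t) - c * (\<Sum>t\<in>-K. p t)"
    unfolding T2_def using split[of p] by (simp add: algebra_simps)
  have i3: "T3 = c * (\<Sum>t\<in>-K. p t) - (\<Sum>t\<in>-K. mu t * p t)"
    unfolding T3_def by (simp add: algebra_simps sum_subtractf sum_distrib_left)
  have i4: "(\<Sum>t\<in>UNIV. mu t * (1 - p t + e t)) = (\<Sum>t\<in>K. mu t * (1 - p t)) + (\<Sum>t\<in>-K. mu t) - (\<Sum>t\<in>-K. mu t * p t) + E"
  proof -
    have "(\<Sum>t\<in>UNIV. mu t * (1 - p t + e t)) = (\<Sum>t\<in>UNIV. mu t * (1 - p t)) + E"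
      unfolding E_def by (simp add: sum.distrib[symmetric] distrib_left)
    also have "(\<Sum>t\<in>UNIV. mu t * (1 - p t)) = (\<Sum>t\<in>K. mu t * (1 - p t)) + (\<Sum>t\<in>-K. mu t * (1 - p t))"
      by (rule split)
    also have "(\<Sum>t\<in>-K. mu t * (1 - p t)) = (\<Sum>t\<in>-K. mu t) - (\<Sum>t\<in>-K. mu t * p t)"
      by (simp add: algebra_simps sum_subtractf)
    finally show ?thesis by simp
  qed
  have tot: "T1 + T2 + T3 + E = 0" using i1 i2 i3 i4 eq by simp
  hence z: "T1 = 0" "T2 = 0" "T3 = 0" "E = 0" using T1 T2 T3 E by linarith+
  show "\<forall>t. e t = 0"
  proof
    fix t
    have "\<forall>t\<in>UNIV. mu t * e t = 0" using z(4) unfolding E_def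
      by (subst sum_nonneg_eq_0_iff[symmetric]) (use mupos e0 in \<open>auto intro: mult_nonneg_nonneg less_imp_le\<close>)
    thus "e t = 0" using mupos[rule_format, of t] by (metis UNIV_I mult_eq_0_iff order_less_irrefl)
  qed
  have pn: "\<forall>t\<in>-K. (c - mu t) * p t = 0" using z(3) unfolding T3_def
    by (subst sum_nonneg_eq_0_iff[symmetric]) (use K p01 in auto)
  show p0: "\<forall>t. t \<notin> K \<longrightarrow> p t = 0"
  proof (intro allI impI)
    fix t assume "t \<notin> K"
    hence "c - mu t > 0" using K by auto
    moreover have "(c - mu t) * p t = 0" using pn \<open>t \<notin> K\<close> by auto
    ultimately show "p t = 0" by simp
  qed
  have "(\<Sum>t\<in>-K. p t) = 0" using p0 by simp
  moreover have "real (card K) = (\<Sum>t\<in>UNIV. p t)" using z(2) cpos unfolding T2_def by simp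
  ultimately have "(\<Sum>t\<in>K. p t) = real (card K)" using split[of p] by simp
  hence "(\<Sum>t\<in>K. 1 - p t) = 0" by (simp add: sum_subtractf)
  hence "\<forall>t\<in>K. 1 - p t = 0" by (subst sum_nonneg_eq_0_iff[symmetric]) (use p01 in auto)
  thus "\<forall>t\<in>K. p t = 1" by simp
qed


context spec begin

lemma forward:
  fixes Tm :: "real^'n^'d" and A :: "real^'m::finite^'n" and Wd :: "real^'n^'m"
  assumes GT: "G = transpose Tm ** Tm" and mupos: "\<forall>t. mu t > 0" and cpos: "c > 0"
    and Kdef: "K = {t. c \<le> mu t}" and cK: "card K = CARD('m)"
    and eq: "(frob_norm (Tm ** softmax_enc \<kappa> A ** Wd - Tm))^2 = (\<Sum>t\<in>-K. mu t)"
  shows "\<exists>x :: 'm \<Rightarrow> real^'n. inj x \<and> independent (range x) \<and> (\<forall>m. x m \<in> span (v ` K)) \<and> (\<forall>m k. x m $ k > 0)"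
proof -
  define We where "We = softmax_enc \<kappa> A"
  define B where "B = We ** Wd"
  define R where "R = span (columns (transpose Wd))"
  have rW: "columns (transpose Wd) = (\<lambda>i. column i (transpose Wd)) ` UNIV" by (auto simp: columns_def)
  have finC: "finite (columns (transpose Wd))" unfolding rW by simp
  have cardC: "card (columns (transpose Wd)) \<le> CARD('m)"
    unfolding rW by (rule card_image_le) simp
  have dimR: "dim R \<le> CARD('m)" unfolding R_def using dim_le_card'[OF finC] cardC by simp
  obtain U where U: "U \<subseteq> R" "pairwise orthogonal U" "\<And>x. x \<in> U \<Longrightarrow> norm x = 1"
      "independent U" "card U = dim R" "span U = R"
    using orthonormal_basis_subspace[of R] unfolding R_def by (metis subspace_span)
  have Un: "\<And>u. u \<in> U \<Longrightarrow> norm u = 1" using U by blast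
  have Upo: "pairwise orthogonal U" using U by blast
  have finU: "finite U" using U(4) by (rule finiteI_independent)
  have uu: "u \<bullet> u = 1" if "u \<in> U" for u using Un[OF that] by (simp add: norm_eq_1)
  define w where "w t = transpose B *v v t" for t
  have wR: "w t \<in> span U" for t
  proof -
    have "w t = transpose Wd *v (transpose We *v v t)"
      unfolding w_def B_def matrix_transpose_mul matrix_vector_mul_assoc ..
    thus ?thesis using U(6) matrix_vector_mult_in_columnspace unfolding R_def by metis
  qed
  define p where "p t = (\<Sum>u\<in>U. (v t \<bullet> u)^2)" for t
  define e where "e t = (\<Sum>u\<in>U. (w t \<bullet> u - v t \<bullet> u)^2)" for t
  have pf: "\<And>t y. y \<in> span U \<Longrightarrow> (y - v t) \<bullet> (y - v t) = 1 - (\<Sum>u\<in>U. (v t \<bullet> u)^2) + (\<Sum>u\<in>U. (y \<bullet> u - v t \<bullet> u)^2)"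
    by (rule proj_formula) (use finU Upo Un v_norm in auto)
  have wform: "(w t - v t) \<bullet> (w t - v t) = 1 - p t + e t" for t
    unfolding p_def e_def by (rule pf[OF wR])
  define P where "P t = (\<Sum>u\<in>U. (v t \<bullet> u) *\<^sub>R u)" for t
  have Pu: "P t \<bullet> u' = v t \<bullet> u'" if "u' \<in> U" for t u'
  proof -
    have "P t \<bullet> u' = (\<Sum>u\<in>U. (v t \<bullet> u) * (u \<bullet> u'))" unfolding P_def by (simp add: inner_sum_left)
    also have "\<dots> = (\<Sum>u\<in>U. if u = u' then v t \<bullet> u' else 0)"
      by (intro sum.cong refl) (use U(2) that uu in \<open>auto simp: pairwise_def orthogonal_def\<close>)
    also have "\<dots> = v t \<bullet> u'" using that finU by (simp add: sum.delta)
    finally show ?thesis .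
  qed
  have PU: "P t \<in> span U" for t unfolding P_def by (intro span_sum span_scale span_base)
  have Pform: "(P t - v t) \<bullet> (P t - v t) = 1 - p t" for t
    using pf[OF PU, of t] by (simp add: Pu p_def)
  have p01: "\<forall>t. 0 \<le> p t \<and> p t \<le> 1"
  proof
    fix t
    have "0 \<le> (P t - v t) \<bullet> (P t - v t)" by simp
    thus "0 \<le> p t \<and> p t \<le> 1" using Pform[of t] unfolding p_def by (auto intro: sum_nonneg)
  qed
  have psum: "(\<Sum>t\<in>UNIV. p t) \<le> real (card K)"
    using parseval_U[OF finU uu] U(5) dimR cK unfolding p_def by simp
  have e0: "\<forall>t. e t \<ge> 0" unfolding e_def by (auto intro: sum_nonneg)
  have eq2: "(\<Sum>t\<in>UNIV. mu t * (1 - p t + e t)) = (\<Sum>t\<in>-K. mu t)"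
  proof -
    have "(frob_norm (Tm ** B - Tm))^2 = (\<Sum>t\<in>UNIV. mu t * ((w t - v t) \<bullet> (w t - v t)))"
      unfolding w_def by (rule err_formula[OF GT])
    moreover have "Tm ** B = Tm ** softmax_enc \<kappa> A ** Wd" unfolding B_def We_def by (simp add: matrix_mul_assoc)
    ultimately show ?thesis using eq by (simp add: wform)
  qed
  note gi = gap_ineq[OF Kdef cpos mupos p01 psum e0 eq2]
  have wP: "w t = P t" for t
  proof -
    have "\<forall>u\<in>U. (w t \<bullet> u - v t \<bullet> u)^2 = 0"
      using gi(1) unfolding e_def by (subst sum_nonneg_eq_0_iff[symmetric]) (auto simp: finU)
    hence wu: "\<forall>u\<in>U. w t \<bullet> u = v t \<bullet> u" by simp
    have "w t = (\<Sum>u\<in>U. (w t \<bullet> u) *\<^sub>R u)" using orthonormal_basis_expand[OF Upo Un wR finU] by simp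
    also have "\<dots> = P t" unfolding P_def using wu by (intro sum.cong refl) auto
    finally show ?thesis .
  qed
  have wK: "w t = (if t \<in> K then v t else 0)" for t
  proof (cases "t \<in> K")
    case True
    hence "(P t - v t) \<bullet> (P t - v t) = 0" using Pform gi(2) by simp
    thus ?thesis using True wP by simp
  next
    case False
    hence "p t = 0" using gi(3) by simp
    hence "\<forall>u\<in>U. (v t \<bullet> u)^2 = 0" unfolding p_def
      by (subst sum_nonneg_eq_0_iff[symmetric]) (auto simp: finU)
    hence "P t = 0" unfolding P_def by (intro sum.neutral) simp
    thus ?thesis using False wP by simp
  qed
  have BvK: "B *v v t = v t" if "t \<in> K" for t
  proof -
    have "(B *v v t) \<bullet> v s = (if s = t then 1 else 0)" for s
    proof -
      have "(B *v v t) \<bullet> v s = v t \<bullet> w s" unfolding w_def by (rule mv_adjoint)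
      also have "\<dots> = (if s = t then 1 else 0)" using that by (simp add: wK orth)
      finally show ?thesis .
    qed
    hence "B *v v t = (\<Sum>s\<in>UNIV. (if s = t then 1 else 0) *\<^sub>R v s)" using expand[of "B *v v t"] by simp
    also have "\<dots> = (\<Sum>s\<in>UNIV. if s = t then v s else 0)" by (intro sum.cong refl) simp
    also have "\<dots> = v t" by simp
    finally show ?thesis .
  qed
  define C where "C = columns We"
  have rC: "C = range (\<lambda>m. column m We)" by (auto simp: C_def columns_def)
  have finCC: "finite C" unfolding rC by simp
  have cardCC: "card C \<le> CARD('m)" unfolding rC by (rule card_image_le) simp
  have sub: "span (v ` K) \<subseteq> span C"
  proof (rule span_minimal[OF _ subspace_span])
    show "v ` K \<subseteq> span C"
    proof
      fix y assume "y \<in> v ` K"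
      then obtain t where t: "t \<in> K" "y = v t" by auto
      have "y = We *v (Wd *v v t)" using BvK[OF t(1)] t(2) unfolding B_def by (simp add: matrix_vector_mul_assoc)
      thus "y \<in> span C" unfolding C_def by (simp add: matrix_vector_mult_in_columnspace)
    qed
  qed
  have dK: "dim (span (v ` K)) = CARD('m)" using indep_vK(3)[of K] cK by simp
  have dC: "dim (span C) \<le> card C" using dim_le_card'[OF finC] by (simp add: finCC dim_le_card')
  have dCge: "CARD('m) \<le> dim (span C)" using dim_subset[OF sub] dK by simp
  have cardCeq: "card C = CARD('m)" using dC dCge cardCC by simp
  have indC: "independent C"
    by (rule card_le_dim_spanning[of C "span C"]) (use finCC dC dCge cardCC in \<open>auto intro: span_base\<close>)
  have spanEq: "span (v ` K) = span C"
    by (rule subspace_dim_equal[OF subspace_span subspace_span sub]) (use dK dC cardCC in simp)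
  define x where "x m = column m We" for m
  have rx: "range x = C" unfolding rC x_def ..
  show ?thesis
  proof (intro exI[of _ x] conjI allI)
    show "inj x" using eq_card_imp_inj_on[of UNIV x] rx cardCeq by simp
    show "independent (range x)" using rx indC by simp
    fix m
    show "x m \<in> span (v ` K)" using spanEq rx span_base[of "x m" C] by auto
    fix k
    show "x m $ k > 0"
      unfolding x_def We_def softmax_enc_def softmax_def
      by (simp add: column_def transpose_def sum_pos)
  qed
qed

end

theorem mainTheorem3:
  fixes Tm :: "real^'t^'d" and \<kappa> :: real
  assumes "rank Tm = CARD('t)"
    and "CARD('m) < CARD('t)"
    and "\<kappa> > 0"
    and "eigval (transpose Tm ** Tm) CARD('m) > eigval (transpose Tm ** Tm) (CARD('m) + 1)"
  shows "(\<exists>(A :: real^'m^'t) (Wd :: real^'t^'m).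
            (frob_norm (Tm ** softmax_enc \<kappa> A ** Wd - Tm))^2
              = (\<Sum>i = CARD('m) + 1..CARD('t). eigval (transpose Tm ** Tm) i))
    \<longleftrightarrow> (\<exists>x :: 'm \<Rightarrow> real^'t. inj x \<and> independent (range x)
            \<and> (\<forall>m. x m \<in> top_eigenspace (transpose Tm ** Tm) CARD('m))
            \<and> (\<forall>m k. x m $ k > 0))"
proof -
  define G where "G = transpose Tm ** Tm"
  have GT: "G = transpose Tm ** Tm" by (rule G_def)
  have sym: "transpose G = G" unfolding G_def by (simp add: matrix_transpose_mul)
  obtain v :: "'t \<Rightarrow> real^'t" and mu where orth: "\<And>s t. v s \<bullet> v t = (if s = t then 1 else 0)"
    and ev: "\<And>t. G *v v t = mu t *\<^sub>R v t" and ex: "\<And>x. (\<Sum>t\<in>UNIV. (x \<bullet> v t) *\<^sub>R v t) = x"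
    using spectral_basis[OF sym] by blast
  interpret spec G v mu using sym orth ev ex by unfold_locales auto
  have cp: "charpoly G = (\<Prod>t\<in>UNIV. [:- mu t, 1:])" by (rule charpoly_spectral[OF orth ev])
  define c where "c = eigval G CARD('m)"
  define K where "K = {t. c \<le> mu t}"
  have M0: "0 < CARD('m)" by simp
  note ef = eig_facts[OF cp M0 assms(2), folded G_def, OF assms(4)[folded G_def], folded c_def]
  have cK: "card K = CARD('m)" unfolding K_def by (rule ef(1))
  have inj: "inj ((*v) Tm)" using assms(1) full_rank_injective by blast
  have mupos: "\<forall>t. mu t > 0"
  proof
    fix t
    have "v t \<noteq> 0" using v_norm[of t] by auto
    hence "Tm *v v t \<noteq> 0" using inj matrix_vector_mult_0_right[of Tm] unfolding inj_def by metis
    hence "0 < (Tm *v v t) \<bullet> (Tm *v v t)" by simp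
    also have "\<dots> = v t \<bullet> (G *v v t)" unfolding G_def by (simp add: mv_adjoint matrix_vector_mul_assoc)
    also have "\<dots> = mu t" by (simp add: ev v_norm)
    finally show "mu t > 0" .
  qed
  have cpos: "c > 0" using ef(5) mupos by auto
  have top: "top_eigenspace G CARD('m) = span (v ` K)"
    unfolding K_def by (rule eigenspace_eq) (use ef(3,4) in auto)
  have tgt: "(\<Sum>i = CARD('m) + 1..CARD('t). eigval G i) = (\<Sum>t\<in>-K. mu t)"
    using ef(2) unfolding K_def by (simp add: Collect_neg_eq)
  have tgt2: "(\<Sum>t\<in>-K. mu t) = (\<Sum>t\<in>{t. t \<notin> K}. mu t)" by (simp add: Collect_neg_eq)
  show ?thesis
    unfolding G_def[symmetric] tgt top
  proof
    assume "\<exists>(A :: real^'m^'t) (Wd :: real^'t^'m). (frob_norm (Tm ** softmax_enc \<kappa> A ** Wd - Tm))^2 = (\<Sum>t\<in>-K. mu t)"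
    then obtain A :: "real^'m^'t" and Wd :: "real^'t^'m"
      where "(frob_norm (Tm ** softmax_enc \<kappa> A ** Wd - Tm))^2 = (\<Sum>t\<in>-K. mu t)" by blast
    thus "\<exists>x :: 'm \<Rightarrow> real^'t. inj x \<and> independent (range x) \<and> (\<forall>m. x m \<in> span (v ` K)) \<and> (\<forall>m k. x m $ k > 0)"
      by (rule forward[OF GT mupos cpos K_def cK])
  next
    assume "\<exists>x :: 'm \<Rightarrow> real^'t. inj x \<and> independent (range x) \<and> (\<forall>m. x m \<in> span (v ` K)) \<and> (\<forall>m k. x m $ k > 0)"
    then obtain x :: "'m \<Rightarrow> real^'t" where x: "inj x" "independent (range x)" "\<forall>m. x m \<in> span (v ` K)" "\<forall>m k. x m $ k > 0"
      by blast
    show "\<exists>(A :: real^'m^'t) (Wd :: real^'t^'m). (frob_norm (Tm ** softmax_enc \<kappa> A ** Wd - Tm))^2 = (\<Sum>t\<in>-K. mu t)"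
      unfolding tgt2 by (rule backward[OF GT assms(3) cK x])
  qed
qed


end
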